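(* Let $m\ge2$ and let $A(\mathbf z)$, $\mathbf z=(z_1,\dots,z_m)$, be the $(2m+1)\times(2m+1)$ matrix whose rows and columns are indexed, in this order, by $s_0,s_1,\dots,s_m,s_1^{-1},\dots,s_m^{-1}$, with entries: column $s_0$ is zero; row $s_0$ has entry $z_j$ in columns $s_j$ and $s_j^{-1}$ ($1\le j\le m$); row $s_i$ ($1\le i\le m$) has entry $z_j$ in column $s_j$ for all $j$, entry $z_j$ in column $s_j^{-1}$ for $j\ne i$, and $0$ in column $s_i^{-1}$; row $s_i^{-1}$ has entry $z_j$ in column $s_j^{-1}$ for all $j$, entry $z_j$ in column $s_j$ for $j\ne i$, and $0$ in column $s_i$. Then, as a polynomial identity, $$\det(I-A(\mathbf z))=(1-z_1)\cdots(1-z_m)\,R(\mathbf z),\qquad R(\mathbf z)=1-\sum_{l=1}^{m}(2l-1)\sum_{1\le i_1<\dots<i_l\le m} z_{i_1}\cdots z_{i_l},$$ where $I$ is the $(2m+1)\times(2m+1)$ identity matrix. *)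

theory Defs
  imports "Jordan_Normal_Form.Determinant"
begin

text \<open>Indexing convention: row/column 0 is s_0; index k with 1 \<le> k \<le> m is s_k;
  index m + k with 1 \<le> k \<le> m is s_k^{-1}.  The variables are z 1, ..., z m.\<close>

definition gen_idx :: "nat \<Rightarrow> nat \<Rightarrow> nat" where
  "gen_idx m c = (if c \<le> m then c else c - m)"

definition is_pos :: "nat \<Rightarrow> nat \<Rightarrow> bool" where
  "is_pos m c \<longleftrightarrow> 1 \<le> c \<and> c \<le> m"

definition A_entry :: "nat \<Rightarrow> (nat \<Rightarrow> 'a::comm_ring_1) \<Rightarrow> nat \<Rightarrow> nat \<Rightarrow> 'a" where
  "A_entry m z r c =
     (if c = 0 then 0
      else if r = 0 then z (gen_idx m c)
      else if gen_idx m r = gen_idx m c \<and> is_pos m r \<noteq> is_pos m c then 0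
      else z (gen_idx m c))"

definition A_mat :: "nat \<Rightarrow> (nat \<Rightarrow> 'a::comm_ring_1) \<Rightarrow> 'a mat" where
  "A_mat m z = mat (2*m+1) (2*m+1) (\<lambda>(r, c). A_entry m z r c)"

definition R_poly :: "nat \<Rightarrow> (nat \<Rightarrow> 'a::comm_ring_1) \<Rightarrow> 'a" where
  "R_poly m z = 1 - (\<Sum>l = 1..m. of_nat (2*l - 1) *
       (\<Sum>S \<in> {S. S \<subseteq> {1..m} \<and> card S = l}. \<Prod>i\<in>S. z i))"

end

theory Submission
  imports Defs
begin


lemma mult_entry:
  assumes "A \<in> carrier_mat n n" "B \<in> carrier_mat n n" "i < n" "j < n"
  shows "(A*B)$$(i,j) = (\<Sum>k<n. A$$(i,k) * B$$(k,j))"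
  using assms by (auto simp: scalar_prod_def lessThan_atLeast0 intro!: sum.cong)

lemma det_upper_prod:
  assumes "\<And>i j. j < i \<Longrightarrow> i < n \<Longrightarrow> A $$ (i,j) = 0" "A \<in> carrier_mat n n"
  shows "det A = (\<Prod>i<n. A$$(i,i))"
  using det_upper_triangular[of A n] assms
  by (auto simp: upper_triangular_def prod_list_diag_prod lessThan_atLeast0)

lemma det_lower_prod:
  assumes "\<And>i j. i < j \<Longrightarrow> j < n \<Longrightarrow> A $$ (i,j) = 0" "A \<in> carrier_mat n n"
  shows "det A = (\<Prod>i<n. A$$(i,i))"
  using det_lower_triangular[of n A] assms
  by (auto simp: prod_list_diag_prod lessThan_atLeast0)

lemma det_row_split:
  assumes A: "A \<in> carrier_mat n n" and B: "B \<in> carrier_mat n n" and C: "C \<in> carrier_mat n n"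
    and k: "k < n"
    and same: "\<And>i j. i < n \<Longrightarrow> j < n \<Longrightarrow> i \<noteq> k \<Longrightarrow> B$$(i,j) = A$$(i,j) \<and> C$$(i,j) = A$$(i,j)"
    and rowk: "\<And>j. j < n \<Longrightarrow> A$$(k,j) = B$$(k,j) + C$$(k,j)"
  shows "det A = det B + det C"
proof -
  have md: "mat_delete B k j = mat_delete A k j \<and> mat_delete C k j = mat_delete A k j" for j
    using A B C same unfolding mat_delete_def
    by (auto intro!: eq_matI)
  have cof: "cofactor B k j = cofactor A k j \<and> cofactor C k j = cofactor A k j" for j
    unfolding cofactor_def using md by simp
  have "det A = (\<Sum>j<n. A $$ (k,j) * cofactor A k j)" by (rule laplace_expansion_row[OF A k])
  also have "\<dots> = (\<Sum>j<n. B $$ (k,j) * cofactor B k j) + (\<Sum>j<n. C $$ (k,j) * cofactor C k j)"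
    by (simp add: cof rowk distrib_right sum.distrib)
  also have "\<dots> = det B + det C"
    using laplace_expansion_row[OF B k] laplace_expansion_row[OF C k] by simp
  finally show ?thesis .
qed

lemma det_rank1:
  fixes d u v :: "nat \<Rightarrow> 'a::comm_ring_1"
  shows "det (mat n n (\<lambda>(i,j). (if i = j then d i else 0) - u i * v j))
     = (\<Prod>i<n. d i) - (\<Sum>k<n. u k * v k * (\<Prod>i\<in>{..<n}-{k}. d i))"
proof (induction n)
  case 0
  then show ?case by simp
next
  case (Suc n)
  let ?f = "\<lambda>(i,j). (if i = j then d i else 0) - u i * v j"
  let ?A = "mat (Suc n) (Suc n) ?f"
  let ?B = "mat (Suc n) (Suc n) (\<lambda>(i,j). if i = n then (if j = n then d n else 0) else ?f (i,j))"
  let ?C = "mat (Suc n) (Suc n) (\<lambda>(i,j). if i = n then - u n * v j else ?f (i,j))"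
  let ?E = "mat (Suc n) (Suc n) (\<lambda>(i,j). if i = j then (if i = n then - u n else 1) else if j = n then - u i else 0)"
  let ?T = "mat (Suc n) (Suc n) (\<lambda>(i,j). if i = n then v j else if i = j then d i else 0)"
  have split: "det ?A = det ?B + det ?C"
    by (rule det_row_split[where k=n]) auto
  have "det ?B = (\<Sum>j<Suc n. ?B $$ (n,j) * cofactor ?B n j)"
    by (rule laplace_expansion_row) auto
  also have "\<dots> = d n * cofactor ?B n n"
    by (subst sum.remove[of _ n]) auto
  also have "mat_delete ?B n n = mat n n ?f"
    unfolding mat_delete_def by (auto intro!: eq_matI)
  hence "cofactor ?B n n = det (mat n n ?f)" unfolding cofactor_def by simp
  finally have dB: "det ?B = d n * ((\<Prod>i<n. d i) - (\<Sum>k<n. u k * v k * (\<Prod>i\<in>{..<n}-{k}. d i)))"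
    using Suc by simp
  have ET: "?C = ?E * ?T"
  proof (rule eq_matI)
    fix i j assume ij: "i < dim_row (?E * ?T)" "j < dim_col (?E * ?T)"
    hence i: "i < Suc n" and j: "j < Suc n" by auto
    have "(?E * ?T) $$ (i,j) = (\<Sum>k<Suc n. ?E$$(i,k) * ?T$$(k,j))"
      by (rule mult_entry[OF _ _ i j]) auto
    also have "\<dots> = ?C $$ (i,j)"
    proof (cases "i = n")
      case True
      then show ?thesis using i j by (subst sum.remove[of _ n]) auto
    next
      case False
      have "(\<Sum>k<Suc n. ?E$$(i,k) * ?T$$(k,j)) = ?E$$(i,i) * ?T$$(i,j) + ?E$$(i,n) * ?T$$(n,j)"
        using False i by (subst sum.remove[of _ i], simp, simp, subst sum.remove[of _ n], auto)
      then show ?thesis using False i j by auto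
    qed
    finally show "?C $$ (i,j) = (?E * ?T) $$ (i,j)" by simp
  qed auto
  have dE: "det ?E = - u n"
    by (subst det_upper_prod[where n="Suc n"]) auto
  have dT: "det ?T = (\<Prod>i<n. d i) * v n"
    by (subst det_lower_prod[where n="Suc n"]) (auto simp: lessThan_Suc)
  have dC: "det ?C = - u n * ((\<Prod>i<n. d i) * v n)"
    unfolding ET by (subst det_mult[of _ "Suc n"]) (auto simp: dE dT)
  have pr: "(\<Prod>i\<in>{..<Suc n}-{k}. d i) = d n * (\<Prod>i\<in>{..<n}-{k}. d i)" if "k < n" for k
  proof -
    have "{..<Suc n}-{k} = insert n ({..<n}-{k})" using that by auto
    thus ?thesis by simp
  qed
  have "(\<Sum>k<Suc n. u k * v k * (\<Prod>i\<in>{..<Suc n}-{k}. d i))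
     = (\<Sum>k<n. u k * v k * (d n * (\<Prod>i\<in>{..<n}-{k}. d i))) + u n * v n * (\<Prod>i<n. d i)"
  proof -
    have "{..<Suc n}-{n} = {..<n}" by auto
    moreover have "(\<Sum>k<n. u k * v k * (\<Prod>i\<in>{..<Suc n}-{k}. d i)) = (\<Sum>k<n. u k * v k * (d n * (\<Prod>i\<in>{..<n}-{k}. d i)))"
      by (rule sum.cong) (auto simp: pr)
    ultimately show ?thesis by simp
  qed
  then show ?case using split dB dC
    by (simp add: lessThan_Suc algebra_simps sum_distrib_left)
qed



lemma prod_pow_sum:
  fixes z :: "nat \<Rightarrow> 'a::comm_ring_1"
  assumes "finite A"
  shows "(\<Prod>i\<in>A. 1 + z i) = (\<Sum>S\<in>Pow A. \<Prod>i\<in>S. z i)"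
  using prod_add[OF assms, of z "\<lambda>_. 1"] by (simp add: add.commute)

lemma comb:
  fixes z :: "nat \<Rightarrow> 'a::comm_ring_1"
  assumes "finite A"
  shows "(\<Prod>i\<in>A. 1 + z i) - (\<Sum>k\<in>A. 2 * z k * (\<Prod>i\<in>A-{k}. 1 + z i))
       = (\<Sum>S\<in>Pow A. (1 - 2 * of_nat (card S)) * (\<Prod>i\<in>S. z i))"
  using assms
proof (induction A rule: finite_induct)
  case empty
  then show ?case by simp
next
  case (insert a A)
  let ?F = "\<lambda>S. (1 - 2 * of_nat (card S)) * (\<Prod>i\<in>S. z i :: 'a)"
  have inj: "inj_on (insert a) (Pow A)" using insert(2) by (auto simp: inj_on_def)
  have disj: "Pow A \<inter> insert a ` Pow A = {}" using insert(2) by auto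
  have "(\<Sum>S\<in>Pow (insert a A). ?F S) = (\<Sum>S\<in>Pow A. ?F S) + (\<Sum>S\<in>insert a ` Pow A. ?F S)"
    unfolding Pow_insert by (rule sum.union_disjoint) (use insert(1) disj in auto)
  also have "(\<Sum>S\<in>insert a ` Pow A. ?F S) = (\<Sum>S\<in>Pow A. ?F (insert a S))"
    by (rule sum.reindex[OF inj, unfolded comp_def])
  also have "\<dots> = (\<Sum>S\<in>Pow A. z a * ?F S - 2 * z a * (\<Prod>i\<in>S. z i))"
  proof (rule sum.cong)
    fix S assume "S \<in> Pow A"
    hence "finite S" "a \<notin> S" using insert(1,2) finite_subset by auto
    thus "?F (insert a S) = z a * ?F S - 2 * z a * (\<Prod>i\<in>S. z i)"
      by (simp add: algebra_simps)
  qed simp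
  also have "\<dots> = z a * (\<Sum>S\<in>Pow A. ?F S) - 2 * z a * (\<Prod>i\<in>A. 1 + z i)"
    by (simp add: sum_subtractf sum_distrib_left prod_pow_sum[OF insert(1)] mult.assoc)
  finally have R: "(\<Sum>S\<in>Pow (insert a A). ?F S) = (1 + z a) * (\<Sum>S\<in>Pow A. ?F S) - 2 * z a * (\<Prod>i\<in>A. 1 + z i)"
    by (simp add: algebra_simps)
  have e1: "insert a A - {a} = A" using insert(2) by auto
  have e2: "(\<Prod>i\<in>insert a A - {k}. 1 + z i) = (1 + z a) * (\<Prod>i\<in>A - {k}. 1 + z i)" if "k \<in> A" for k
  proof -
    have "insert a A - {k} = insert a (A - {k})" using that insert(2) by auto
    thus ?thesis using insert(1,2) by simp
  qed
  have S: "(\<Sum>k\<in>insert a A. 2 * z k * (\<Prod>i\<in>insert a A-{k}. 1 + z i))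
      = 2 * z a * (\<Prod>i\<in>A. 1 + z i) + (1 + z a) * (\<Sum>k\<in>A. 2 * z k * (\<Prod>i\<in>A-{k}. 1 + z i))"
  proof -
    have "(\<Sum>k\<in>A. 2 * z k * (\<Prod>i\<in>insert a A-{k}. 1 + z i)) = (\<Sum>k\<in>A. (1 + z a) * (2 * z k * (\<Prod>i\<in>A-{k}. 1 + z i)))"
      by (rule sum.cong) (auto simp: e2)
    thus ?thesis using insert(1,2) by (simp add: e1 sum_distrib_left)
  qed
  let ?P = "(\<Prod>i\<in>A. 1 + z i)" and ?Q = "(\<Sum>k\<in>A. 2 * z k * (\<Prod>i\<in>A-{k}. 1 + z i))"
  have "(\<Prod>i\<in>insert a A. 1 + z i) - (\<Sum>k\<in>insert a A. 2 * z k * (\<Prod>i\<in>insert a A-{k}. 1 + z i))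
     = (1 + z a) * ?P - (2 * z a * ?P + (1 + z a) * ?Q)" using S insert(1,2) by simp
  also have "\<dots> = (1 + z a) * (?P - ?Q) - 2 * z a * ?P" by (simp add: algebra_simps)
  also have "\<dots> = (\<Sum>S\<in>Pow (insert a A). ?F S)" by (simp only: insert.IH R)
  finally show ?case .
qed

lemma to_R:
  fixes z :: "nat \<Rightarrow> 'a::comm_ring_1"
  shows "(\<Sum>S\<in>Pow {1..m}. (1 - 2 * of_nat (card S)) * (\<Prod>i\<in>S. z i)) = R_poly m z"
proof -
  let ?F = "\<lambda>S. (1 - 2 * of_nat (card S)) * (\<Prod>i\<in>S. z i :: 'a)"
  let ?X = "\<lambda>l. (\<Sum>S \<in> {S. S \<subseteq> {1..m} \<and> card S = l}. \<Prod>i\<in>S. z i)"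
  have "(\<Sum>S\<in>Pow {1..m}. ?F S) = (\<Sum>l\<in>{0..m}. (\<Sum>S\<in>{S. S \<in> Pow {1..m} \<and> card S = l}. ?F S))"
    by (rule sum.group[symmetric]) (auto dest: card_mono[rotated])
  also have "\<dots> = (\<Sum>l\<in>{0..m}. (1 - 2 * of_nat l) * ?X l)"
    by (rule sum.cong) (auto simp: sum_distrib_left intro!: sum.cong)
  also have "\<dots> = ?X 0 + (\<Sum>l\<in>{1..m}. (1 - 2 * of_nat l) * ?X l)"
    by (simp add: sum.atLeast_Suc_atMost)
  also have "?X 0 = 1"
  proof -
    have "{S. S \<subseteq> {1..m} \<and> card S = 0} = {{}}" by (auto dest: finite_subset)
    thus ?thesis by simp
  qed
  also have "(\<Sum>l\<in>{1..m}. (1 - 2 * of_nat l) * ?X l) = - (\<Sum>l = 1..m. of_nat (2*l - 1) * ?X l)"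
    by (auto simp: sum_negf[symmetric] of_nat_diff algebra_simps intro!: sum.cong)
  finally show ?thesis unfolding R_poly_def by simp
qed


lemma mult_L:
  fixes X :: "'a::comm_ring_1 mat"
  assumes X: "X \<in> carrier_mat n n" and r: "r < n" and c: "c < n"
    and s: "Q r \<Longrightarrow> s r < n"
  shows "(mat n n (\<lambda>(i,j). (if i = j then 1 else 0) + (if Q i \<and> j = s i then a i else 0)) * X) $$ (r,c)
     = X $$ (r,c) + (if Q r then a r * X $$ (s r, c) else 0)"
proof -
  have "(mat n n (\<lambda>(i,j). (if i = j then 1 else 0) + (if Q i \<and> j = s i then a i else 0)) * X) $$ (r,c)
    = (\<Sum>k<n. (if k = r then X $$ (r,c) else 0) + (if k = s r then (if Q r then a r * X $$ (s r, c) else 0) else 0))"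
    by (subst mult_entry[OF _ X r c], force, rule sum.cong, simp, use r in \<open>auto simp: distrib_right\<close>)
  also have "\<dots> = X $$ (r,c) + (if Q r then a r * X $$ (s r, c) else 0)"
    using r s by (cases "Q r") (simp_all add: sum.distrib)
  finally show ?thesis .
qed

lemma mult_R:
  fixes X :: "'a::comm_ring_1 mat"
  assumes X: "X \<in> carrier_mat n n" and r: "r < n" and c: "c < n"
    and s: "Q c \<Longrightarrow> s c < n"
  shows "(X * mat n n (\<lambda>(i,j). (if i = j then 1 else 0) + (if Q j \<and> i = s j then a j else 0))) $$ (r,c)
     = X $$ (r,c) + (if Q c then X $$ (r, s c) * a c else 0)"
proof -
  have "(X * mat n n (\<lambda>(i,j). (if i = j then 1 else 0) + (if Q j \<and> i = s j then a j else 0))) $$ (r,c)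
    = (\<Sum>k<n. (if k = c then X $$ (r,c) else 0) + (if k = s c then (if Q c then X $$ (r, s c) * a c else 0) else 0))"
    by (subst mult_entry[OF X _ r c], force, rule sum.cong, simp, use c in \<open>auto simp: distrib_left\<close>)
  also have "\<dots> = X $$ (r,c) + (if Q c then X $$ (r, s c) * a c else 0)"
    using c s by (cases "Q c") (simp_all add: sum.distrib)
  finally show ?thesis .
qed

lemma mult_KP:
  fixes K P :: "'a::comm_ring_1 mat"
  assumes K: "K \<in> carrier_mat n n" and P: "P \<in> carrier_mat n n" and r: "r < n" and c: "c < n"
    and hK: "\<And>j. j < n \<Longrightarrow> \<not> Q j \<Longrightarrow> K $$ (r,j) = (if r = j then 1 else 0)"
    and hP: "\<And>j. j < n \<Longrightarrow> Q j \<Longrightarrow> P $$ (j,c) = (if j = c then 1 else 0)"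
  shows "(K * P) $$ (r,c) = (if Q c then K $$ (r,c) else 0) + (if Q r then 0 else P $$ (r,c))"
proof -
  have "(K * P) $$ (r,c) = (\<Sum>k<n. (if k = c then (if Q c then K $$ (r,c) else 0) else 0)
         + (if k = r then (if Q r then 0 else P $$ (r,c)) else 0))"
  proof (subst mult_entry[OF K P r c], rule sum.cong)
    fix k assume "k \<in> {..<n}"
    hence k: "k < n" by simp
    show "K $$ (r, k) * P $$ (k, c) = (if k = c then (if Q c then K $$ (r,c) else 0) else 0)
         + (if k = r then (if Q r then 0 else P $$ (r,c)) else 0)"
      by (cases "Q k") (auto simp: hK[OF k] hP[OF k])
  qed simp
  also have "\<dots> = (if Q c then K $$ (r,c) else 0) + (if Q r then 0 else P $$ (r,c))"
    using r c by (simp add: sum.distrib)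
  finally show ?thesis .
qed

theorem lemma1:
  fixes m :: nat and z :: "nat \<Rightarrow> 'a::comm_ring_1"
  assumes "m \<ge> 2"
  shows "det (1\<^sub>m (2*m+1) - A_mat m z) = (\<Prod>i = 1..m. 1 - z i) * R_poly m z"
proof -
  define N where "N = 2*m+1"
  define M where "M = 1\<^sub>m N - A_mat m z"
  define Q where "Q = (\<lambda>i::nat. 1 \<le> i \<and> i \<le> m)"
  define L :: "'a mat" where "L = mat N N (\<lambda>(i,j). (if i = j then 1 else 0) + (if Q i \<and> j = i + m then 1 else 0))"
  define E :: "'a mat" where "E = mat N N (\<lambda>(i,j). (if i = j then 1 else 0) + (if m < j \<and> i = j - m then -1 else 0))"
  define d where "d = (\<lambda>i. if Q i then 1 + z i else 1)"
  define u :: "nat \<Rightarrow> 'a" where "u = (\<lambda>i. if i = 0 then 1 else if i \<le> m then 2 else 0)"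
  define v where "v = (\<lambda>i. if Q i then z i else 0)"
  define K where "K = mat N N (\<lambda>(i,j). (if i = j then d i else 0) - u i * v j)"
  define P where "P = mat N N (\<lambda>(j,c). if Q c then (if j = c then 1 else if m < j \<and> j \<noteq> c + m then - z c else 0)
      else if j = c then (if m < c then 1 - z (c - m) else 1) else 0)"
  have Mc: "M \<in> carrier_mat N N" unfolding M_def A_mat_def N_def by auto
  have Lc: "L \<in> carrier_mat N N" unfolding L_def by auto
  have Ec: "E \<in> carrier_mat N N" unfolding E_def by auto
  have Kc: "K \<in> carrier_mat N N" unfolding K_def by auto
  have Pc: "P \<in> carrier_mat N N" unfolding P_def by auto
  have Ment: "M $$ (r,c) = (if r = c then 1 else 0) - A_entry m z r c" if "r < N" "c < N" for r c
    using that unfolding M_def A_mat_def N_def by auto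
  have dL: "det L = 1"
    using assms by (subst det_upper_prod[OF _ Lc]) (auto simp: L_def Q_def)
  have dE: "det E = 1"
    using assms by (subst det_upper_prod[OF _ Ec]) (auto simp: E_def intro!: prod.neutral)
  have eq: "L * M * E = K * P"
  proof (rule eq_matI)
    fix r c assume "r < dim_row (K * P)" "c < dim_col (K * P)"
    hence r: "r < N" and c: "c < N" using Kc Pc by auto
    have LM: "(L * M) $$ (i,j) = M $$ (i,j) + (if Q i then M $$ (i + m, j) else 0)" if "i < N" "j < N" for i j
      unfolding L_def using mult_L[OF Mc that, of Q "\<lambda>i. i + m" "\<lambda>_. 1"] that by (auto simp: Q_def N_def)
    have LMc: "L * M \<in> carrier_mat N N" using Lc Mc by auto
    have "(L * M * E) $$ (r,c) = (L * M) $$ (r,c) + (if m < c then (L * M) $$ (r, c - m) * (-1) else 0)"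
      unfolding E_def using mult_R[OF LMc r c, of "\<lambda>j. m < j" "\<lambda>j. j - m" "\<lambda>_. -1"] c by (auto simp: N_def)
    also have "\<dots> = (if Q c then K $$ (r,c) else 0) + (if Q r then 0 else P $$ (r,c))"
      using r c unfolding LM[OF r c]
      by (auto simp: LM Ment K_def P_def Q_def d_def u_def v_def N_def A_entry_def gen_idx_def is_pos_def)
    also have "\<dots> = (K * P) $$ (r,c)"
      by (rule mult_KP[OF Kc Pc r c, symmetric]) (use r c in \<open>auto simp: K_def P_def d_def u_def v_def Q_def\<close>)
    finally show "(L * M * E) $$ (r,c) = (K * P) $$ (r,c)" .
  qed (use Kc Pc Lc Mc Ec in auto)
  have dM: "det M = det K * det P"
  proof -
    have "det (L * M * E) = det L * det M * det E"
      using Lc Mc Ec by (simp add: det_mult[of _ N])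
    thus ?thesis using eq dL dE det_mult[OF Kc Pc] by simp
  qed
  have dK: "det K = (\<Prod>i<N. d i) - (\<Sum>k<N. u k * v k * (\<Prod>i\<in>{..<N}-{k}. d i))"
    unfolding K_def by (rule det_rank1)
  have a: "(\<Prod>i<N. d i) = (\<Prod>i\<in>{1..m}. 1 + z i)"
  proof -
    have "{x \<in> {..<N}. Q x} = {1..m}" by (auto simp: Q_def N_def)
    thus ?thesis using prod.inter_filter[of "{..<N}" "\<lambda>i. 1 + z i" Q] by (simp add: d_def)
  qed
  have b: "(\<Sum>k<N. u k * v k * (\<Prod>i\<in>{..<N}-{k}. d i)) = (\<Sum>k\<in>{1..m}. 2 * z k * (\<Prod>i\<in>{1..m}-{k}. 1 + z i))"
  proof -
    have pk: "(\<Prod>i\<in>{..<N}-{k}. d i) = (\<Prod>i\<in>{1..m}-{k}. 1 + z i)" for k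
    proof -
      have "{x \<in> {..<N}-{k}. Q x} = {1..m}-{k}" by (auto simp: Q_def N_def)
      thus ?thesis using prod.inter_filter[of "{..<N}-{k}" "\<lambda>i. 1 + z i" Q] by (simp add: d_def)
    qed
    have "(\<Sum>k<N. u k * v k * (\<Prod>i\<in>{..<N}-{k}. d i)) = (\<Sum>k<N. if Q k then 2 * z k * (\<Prod>i\<in>{1..m}-{k}. 1 + z i) else 0)"
      by (rule sum.cong) (auto simp: pk u_def v_def Q_def)
    also have "\<dots> = (\<Sum>k\<in>{x \<in> {..<N}. Q x}. 2 * z k * (\<Prod>i\<in>{1..m}-{k}. 1 + z i))"
      by (rule sum.inter_filter[symmetric]) simp
    also have "{x \<in> {..<N}. Q x} = {1..m}" by (auto simp: Q_def N_def)
    finally show ?thesis .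
  qed
  have dP: "det P = (\<Prod>i\<in>{1..m}. 1 - z i)"
  proof -
    have "det P = (\<Prod>i<N. P $$ (i,i))"
      by (rule det_lower_prod[OF _ Pc]) (auto simp: P_def Q_def)
    also have "\<dots> = (\<Prod>i<N. if m < i then 1 - z (i - m) else 1)"
      by (rule prod.cong) (auto simp: P_def Q_def)
    also have "\<dots> = (\<Prod>i\<in>{x \<in> {..<N}. m < x}. 1 - z (i - m))"
      by (rule prod.inter_filter[symmetric]) simp
    also have "{x \<in> {..<N}. m < x} = (\<lambda>i. i + m) ` {1..m}"
    proof
      show "{x \<in> {..<N}. m < x} \<subseteq> (\<lambda>i. i + m) ` {1..m}"
      proof
        fix x assume "x \<in> {x \<in> {..<N}. m < x}"
        hence "x - m \<in> {1..m}" "x = (x - m) + m" by (auto simp: N_def)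
        thus "x \<in> (\<lambda>i. i + m) ` {1..m}" by blast
      qed
    qed (auto simp: N_def)
    also have "(\<Prod>i\<in>(\<lambda>i. i + m) ` {1..m}. 1 - z (i - m)) = (\<Prod>i\<in>{1..m}. 1 - z i)"
      by (subst prod.reindex) (auto simp: inj_on_def)
    finally show ?thesis .
  qed
  have "det M = ((\<Prod>i\<in>{1..m}. 1 + z i) - (\<Sum>k\<in>{1..m}. 2 * z k * (\<Prod>i\<in>{1..m}-{k}. 1 + z i))) * (\<Prod>i\<in>{1..m}. 1 - z i)"
    using dM dK a b dP by simp
  also have "\<dots> = R_poly m z * (\<Prod>i\<in>{1..m}. 1 - z i)"
    unfolding comb[OF finite_atLeastAtMost] to_R by (rule refl)
  finally show ?thesis unfolding M_def N_def by (simp add: mult.commute)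
qed

end
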